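(* Let $B>0$ and $d\ge1$. The compressor $\mathcal{M}_{B,0}$ is not differentially private, i.e., there is no finite $\epsilon>0$ for which $\mathcal{M}_{B,0}$ is $\epsilon$-differentially private. When $\beta>0$, the compressor $\mathcal{M}_{B,\beta}$ is $d\cdot\log\left(\frac{2B+\beta}{\beta}\right)$-differentially private (for all gradient inputs in $\mathbb{R}^d$).
   Context: For $B>0$, the clipping function is $\mathrm{clip}\{g,B\}=\max\{-B,\min\{B,g\}\}$ for $g\in\mathbb{R}$. For $\beta\ge0$ and $B>0$, the randomized compressor $\mathcal{M}_{B,\beta}:\mathbb{R}^d\to\{-1,1\}^d$ acts independently on each coordinate: for $\boldsymbol g\in\mathbb{R}^d$ with coordinates $g_i$, $[\mathcal{M}_{B,\beta}]_i(\boldsymbol g)=1$ with probability $\frac{B+\beta+\mathrm{clip}\{g_i,B\}}{2B+2\beta}$ and $=-1$ otherwise. A randomized algorithm $\mathcal{M}$ with domain $\mathbb{R}^d$ is $\epsilon$-differentially private if $\Pr[\mathcal{M}(x)\in\mathcal{S}]\le e^{\epsilon}\Pr[\mathcal{M}(y)\in\mathcal{S}]$ for all subsets $\mathcal{S}$ of the range of $\mathcal{M}$ and all $x,y\in\mathbb{R}^d$ with $\|x-y\|_1\le1$. *)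

theory Defs
  imports "HOL-Analysis.Analysis" "HOL-Probability.Probability"
begin

definition clip :: "real \<Rightarrow> real \<Rightarrow> real" where
  "clip g B = max (- B) (min B g)"

definition compressor :: "real \<Rightarrow> real \<Rightarrow> real ^ 'n::finite \<Rightarrow> ('n \<Rightarrow> int) pmf" where
  "compressor B \<beta> g = Pi_pmf UNIV 0
     (\<lambda>i. map_pmf (\<lambda>b. if b then 1 else -1)
            (bernoulli_pmf ((B + \<beta> + clip (g $ i) B) / (2 * B + 2 * \<beta>))))"

definition l1_dist :: "real ^ 'n::finite \<Rightarrow> real ^ 'n \<Rightarrow> real" where
  "l1_dist x y = (\<Sum>i\<in>UNIV. \<bar>x $ i - y $ i\<bar>)"

definition diff_private :: "(real ^ 'n::finite \<Rightarrow> 'b pmf) \<Rightarrow> real \<Rightarrow> bool" where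
  "diff_private M \<epsilon> \<longleftrightarrow>
     (\<forall>S x y. l1_dist x y \<le> 1 \<longrightarrow>
        measure_pmf.prob (M x) S \<le> exp \<epsilon> * measure_pmf.prob (M y) S)"

end

theory Submission
  imports Defs
begin

lemma clip_bounds: "B > 0 \<Longrightarrow> - B \<le> clip g B \<and> clip g B \<le> B"
  unfolding clip_def by auto

lemma pmf_sign:
  assumes "0 \<le> p" "p \<le> 1"
  shows "pmf (map_pmf (\<lambda>b. if b then (1::int) else -1) (bernoulli_pmf p)) v =
         (if v = 1 then p else if v = -1 then 1 - p else 0)"
proof -
  have "pmf (map_pmf (\<lambda>b. if b then (1::int) else -1) (bernoulli_pmf p)) v =
        measure_pmf.prob (bernoulli_pmf p) ((\<lambda>b. if b then (1::int) else -1) -` {v})"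
    by (rule pmf_map)
  moreover have "(\<lambda>b. if b then (1::int) else -1) -` {v} =
      (if v = 1 then {True} else if v = -1 then {False} else {})" by (auto split: if_splits)
  ultimately show ?thesis using assms by (auto simp: measure_pmf_single split: if_splits)
qed

lemma pmf_comp:
  fixes g :: "real ^ 'n::finite"
  assumes "B > 0" "\<beta> \<ge> 0"
  shows "pmf (compressor B \<beta> g) f = (\<Prod>i\<in>UNIV.
     (if f i = 1 then (B + \<beta> + clip (g $ i) B) / (2 * B + 2 * \<beta>)
      else if f i = -1 then 1 - (B + \<beta> + clip (g $ i) B) / (2 * B + 2 * \<beta>) else 0))"
proof -
  have h: "pmf (map_pmf (\<lambda>b. if b then (1::int) else - 1)
            (bernoulli_pmf ((B + \<beta> + clip (g $ i) B) / (2 * B + 2 * \<beta>)))) v =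
     (if v = 1 then (B + \<beta> + clip (g $ i) B) / (2 * B + 2 * \<beta>)
      else if v = -1 then 1 - (B + \<beta> + clip (g $ i) B) / (2 * B + 2 * \<beta>) else 0)" for i v
  proof -
  have c: "- B \<le> clip (g $ i) B" "clip (g $ i) B \<le> B" using clip_bounds[OF assms(1)] by auto
  have "0 \<le> (B + \<beta> + clip (g $ i) B) / (2 * B + 2 * \<beta>)"
    using c assms by (intro divide_nonneg_pos) auto
  moreover have "(B + \<beta> + clip (g $ i) B) / (2 * B + 2 * \<beta>) \<le> 1"
    using c assms by (subst divide_le_eq_1) auto
  ultimately show ?thesis by (rule pmf_sign)
  qed
  show ?thesis unfolding compressor_def by (subst pmf_Pi') (simp_all add: h)
qed

lemma factor_bound:
  fixes a b B \<beta> :: real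
  assumes "B > 0" "\<beta> > 0" "-B \<le> a" "a \<le> B" "-B \<le> b" "b \<le> B"
  shows "(B + \<beta> + a) / (2 * B + 2 * \<beta>) \<le> ((2 * B + \<beta>) / \<beta>) * ((B + \<beta> + b) / (2 * B + 2 * \<beta>))"
    and "1 - (B + \<beta> + a) / (2 * B + 2 * \<beta>) \<le> ((2 * B + \<beta>) / \<beta>) * (1 - (B + \<beta> + b) / (2 * B + 2 * \<beta>))"
proof -
  have D: "2 * B + 2 * \<beta> > 0" using assms by auto
  have "B + \<beta> + a \<le> ((2 * B + \<beta>) / \<beta>) * (B + \<beta> + b)"
  proof -
    have "B + \<beta> + a \<le> 2 * B + \<beta>" using assms by auto
    also have "\<dots> = ((2 * B + \<beta>) / \<beta>) * \<beta>" using assms by auto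
    also have "\<dots> \<le> ((2 * B + \<beta>) / \<beta>) * (B + \<beta> + b)"
      using assms by (intro mult_left_mono) auto
    finally show ?thesis .
  qed
  then have "(B + \<beta> + a) / (2 * B + 2 * \<beta>) \<le> (((2 * B + \<beta>) / \<beta>) * (B + \<beta> + b)) / (2 * B + 2 * \<beta>)"
    using D by (intro divide_right_mono) auto
  then show "(B + \<beta> + a) / (2 * B + 2 * \<beta>) \<le> ((2 * B + \<beta>) / \<beta>) * ((B + \<beta> + b) / (2 * B + 2 * \<beta>))"
    by (simp only: times_divide_eq_right)
  have e: "1 - (B + \<beta> + a) / (2 * B + 2 * \<beta>) = (B + \<beta> - a) / (2 * B + 2 * \<beta>)"
    "1 - (B + \<beta> + b) / (2 * B + 2 * \<beta>) = (B + \<beta> - b) / (2 * B + 2 * \<beta>)"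
    using D by (auto simp: field_simps)
  have "B + \<beta> - a \<le> ((2 * B + \<beta>) / \<beta>) * (B + \<beta> - b)"
  proof -
    have "B + \<beta> - a \<le> 2 * B + \<beta>" using assms by auto
    also have "\<dots> = ((2 * B + \<beta>) / \<beta>) * \<beta>" using assms by auto
    also have "\<dots> \<le> ((2 * B + \<beta>) / \<beta>) * (B + \<beta> - b)"
      using assms by (intro mult_left_mono) auto
    finally show ?thesis .
  qed
  then have "(B + \<beta> - a) / (2 * B + 2 * \<beta>) \<le> (((2 * B + \<beta>) / \<beta>) * (B + \<beta> - b)) / (2 * B + 2 * \<beta>)"
    using D by (intro divide_right_mono) auto
  then show "1 - (B + \<beta> + a) / (2 * B + 2 * \<beta>) \<le> ((2 * B + \<beta>) / \<beta>) * (1 - (B + \<beta> + b) / (2 * B + 2 * \<beta>))"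
    unfolding e by (simp only: times_divide_eq_right)
qed

lemma pmf_ratio:
  fixes x y :: "real ^ 'n::finite"
  assumes "B > 0" "\<beta> > 0"
  shows "pmf (compressor B \<beta> x) f \<le> exp (real CARD('n) * ln ((2 * B + \<beta>) / \<beta>)) * pmf (compressor B \<beta> y) f"
proof -
  define r where "r = (2 * B + \<beta>) / \<beta>"
  have r: "r > 0" using assms by (auto simp: r_def)
  have "exp (real CARD('n) * ln r) = r ^ CARD('n)"
    using r by (simp add: exp_ln_iff exp_of_nat_mult)
  have "pmf (compressor B \<beta> x) f \<le> (\<Prod>i\<in>UNIV. r * 
     (if f i = 1 then (B + \<beta> + clip (y $ i) B) / (2 * B + 2 * \<beta>)
      else if f i = -1 then 1 - (B + \<beta> + clip (y $ i) B) / (2 * B + 2 * \<beta>) else 0))"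
    unfolding pmf_comp[OF assms(1) less_imp_le[OF assms(2)]]
  proof (rule prod_mono, intro conjI)
    fix i
    have cx: "- B \<le> clip (x $ i) B" "clip (x $ i) B \<le> B" using clip_bounds[OF assms(1)] by auto
    have cy: "- B \<le> clip (y $ i) B" "clip (y $ i) B \<le> B" using clip_bounds[OF assms(1)] by auto
    have D: "2 * B + 2 * \<beta> > 0" using assms by auto
    show "0 \<le> (if f i = 1 then (B + \<beta> + clip (x $ i) B) / (2 * B + 2 * \<beta>)
      else if f i = -1 then 1 - (B + \<beta> + clip (x $ i) B) / (2 * B + 2 * \<beta>) else 0)"
      using cx D assms by (auto simp: field_simps)
    show "(if f i = 1 then (B + \<beta> + clip (x $ i) B) / (2 * B + 2 * \<beta>)
      else if f i = -1 then 1 - (B + \<beta> + clip (x $ i) B) / (2 * B + 2 * \<beta>) else 0) \<le> r * 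
     (if f i = 1 then (B + \<beta> + clip (y $ i) B) / (2 * B + 2 * \<beta>)
      else if f i = -1 then 1 - (B + \<beta> + clip (y $ i) B) / (2 * B + 2 * \<beta>) else 0)"
      using factor_bound[OF assms cx cy, folded r_def] by auto
  qed
  also have "\<dots> = r ^ CARD('n) * pmf (compressor B \<beta> y) f"
    unfolding pmf_comp[OF assms(1) less_imp_le[OF assms(2)]]
    by (simp add: prod.distrib)
  finally show ?thesis using \<open>exp (real CARD('n) * ln r) = r ^ CARD('n)\<close> r_def by simp
qed

lemma prob_ratio:
  fixes p q :: "'a pmf" and c :: real
  assumes "\<And>f. pmf p f \<le> c * pmf q f"
  shows "measure_pmf.prob p S \<le> c * measure_pmf.prob q S"
proof -
  have "measure_pmf.prob p S = infsetsum (pmf p) S" by (rule measure_pmf_conv_infsetsum)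
  also have "\<dots> \<le> infsetsum (\<lambda>f. c * pmf q f) S"
    apply (rule infsetsum_mono)
      apply (rule pmf_abs_summable)
     apply (rule abs_summable_on_cmult_right)
     apply (rule pmf_abs_summable)
    using assms by auto
  also have "\<dots> = c * infsetsum (pmf q) S" by (rule infsetsum_cmult_right) (rule pmf_abs_summable)
  also have "\<dots> = c * measure_pmf.prob q S" by (simp add: measure_pmf_conv_infsetsum)
  finally show ?thesis .
qed

theorem theorem2:
  fixes B :: real
  assumes "B > 0"
  shows "\<not> (\<exists>\<epsilon>>0. diff_private (compressor B 0 :: real ^ 'n::finite \<Rightarrow> ('n \<Rightarrow> int) pmf) \<epsilon>)
     \<and> (\<forall>\<beta>>0. diff_private (compressor B \<beta> :: real ^ 'n::finite \<Rightarrow> ('n \<Rightarrow> int) pmf)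
              (real CARD('n) * ln ((2 * B + \<beta>) / \<beta>)))"
proof
  show "\<forall>\<beta>>0. diff_private (compressor B \<beta> :: real ^ 'n::finite \<Rightarrow> ('n \<Rightarrow> int) pmf)
              (real CARD('n) * ln ((2 * B + \<beta>) / \<beta>))"
    unfolding diff_private_def
    by (intro allI impI prob_ratio pmf_ratio[OF assms])
  show "\<not> (\<exists>\<epsilon>>0. diff_private (compressor B 0 :: real ^ 'n::finite \<Rightarrow> ('n \<Rightarrow> int) pmf) \<epsilon>)"
  proof
    assume "\<exists>\<epsilon>>0. diff_private (compressor B 0 :: real ^ 'n::finite \<Rightarrow> ('n \<Rightarrow> int) pmf) \<epsilon>"
    then obtain \<epsilon> where dp: "diff_private (compressor B 0 :: real ^ 'n::finite \<Rightarrow> ('n \<Rightarrow> int) pmf) \<epsilon>"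
      by blast
    define d where "d = real CARD('n)"
    have d: "d > 0" by (simp add: d_def)
    define y :: "real ^ 'n" where "y = (\<chi> i. - B)"
    define x :: "real ^ 'n" where "x = (\<chi> i. - B + 1 / d)"
    have l1: "l1_dist x y \<le> 1" using d by (simp add: l1_dist_def x_def y_def d_def)
    have py: "pmf (compressor B 0 y) (\<lambda>_. 1) = 0"
      unfolding pmf_comp[OF assms order_refl] using assms
      by (simp add: y_def clip_def)
    have cx: "clip (x $ i) B > - B" for i
      using d assms by (simp add: x_def clip_def)
    have px: "pmf (compressor B 0 x) (\<lambda>_. 1) > 0"
      unfolding pmf_comp[OF assms order_refl] using assms cx
      by (intro prod_pos) (auto intro!: divide_pos_pos simp: add.commute[of B] neg_less_iff_less, smt (verit) cx)
    have "measure_pmf.prob (compressor B 0 x) {\<lambda>_. 1} \<le> exp \<epsilon> * measure_pmf.prob (compressor B 0 y) {\<lambda>_. 1}"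
      using dp l1 unfolding diff_private_def by blast
    then show False using px py by (simp add: measure_pmf_single)
  qed
qed

end
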